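(* Let $p,q\in(0,1/2)$ and let $S_1(x)=px$, $S_2(x)=qx$, $S_3(x)=px+1-p$, $S_4(x)=qx+1-q$. Let $K$ be the attractor of $\{S_1,S_2,S_3,S_4\}$ and $A=S_3(K)\cup S_4(K)$. Suppose that for all $m,n\in\mathbb N$, $S_1^m(A)\cap S_2^n(A)=\varnothing$. Then (i) $K=\{0\}\cup\bigcup_{m,n=0}^{\infty}S_1^mS_2^n(A)$, where the sets $S_1^mS_2^n(A)$, $(m,n)\in(\mathbb N\cup\{0\})^2$, are pairwise disjoint (and do not contain $0$); (ii) for any $m,n\in\mathbb N\cup\{0\}$, $S_1^m(K)\cap S_2^n(K)=S_1^mS_2^n(K)$.
   Context: The attractor of a finite system of contractions $\{S_1,\dots,S_m\}$ of $\mathbb R$ is the unique nonempty compact set $K$ with $K=\bigcup_i S_i(K)$. *)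

theory Defs
  imports "HOL-Analysis.Analysis"
begin

text \<open>For a finite family of contractions such a set is unique (Hutchinson).\<close>
definition is_attractor :: "(real \<Rightarrow> real) set \<Rightarrow> real set \<Rightarrow> bool" where
  "is_attractor F K \<longleftrightarrow> K \<noteq> {} \<and> compact K \<and> K = (\<Union>f\<in>F. f ` K)"

end

theory Submission
  imports Defs
begin

lemma small_pow:
  fixes p q :: real
  assumes "0 < p" "p < 1/2" "0 < q" "q < 1/2" "i + j \<ge> 1"
  shows "p^i * q^j < 1/2"
proof (cases "i \<ge> 1")
  case True
  have "p^i \<le> p^1" by (rule power_decreasing) (use True assms in auto)
  moreover have "q^j \<le> 1" using assms by (simp add: power_le_one)
  moreover have "0 \<le> p^i" using assms by simp
  ultimately have "p^i * q^j \<le> p^i" by (intro mult_left_le)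
  then have "p^i * q^j \<le> p" using \<open>p^i \<le> p^1\<close> by simp
  then show ?thesis using assms by simp
next
  case False
  then have "j \<ge> 1" "i = 0" using assms by auto
  have "q^j \<le> q^1" by (rule power_decreasing) (use \<open>j \<ge> 1\<close> assms in auto)
  then show ?thesis using assms \<open>i = 0\<close> by simp
qed

locale setting =
  fixes p q :: real and A :: "real set"
  assumes hp: "0 < p" "p < 1/2" and hq: "0 < q" "q < 1/2"
    and hA: "\<And>a. a \<in> A \<Longrightarrow> 1/2 < a \<and> a \<le> 1"
    and hd: "\<And>m n a a'. m \<ge> 1 \<Longrightarrow> n \<ge> 1 \<Longrightarrow> a \<in> A \<Longrightarrow> a' \<in> A \<Longrightarrow> p^m * a \<noteq> q^n * a'"
begin

lemma core1:
  assumes "a \<in> A" "a' \<in> A" "p^i * q^j * a' = a"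
  shows "i = 0 \<and> j = 0"
proof (rule ccontr)
  assume "\<not> (i = 0 \<and> j = 0)"
  then have "i + j \<ge> 1" by auto
  then have s: "p^i * q^j < 1/2" using small_pow hp hq by blast
  have "p^i * q^j \<ge> 0" using hp hq by simp
  have "p^i * q^j * a' \<le> p^i * q^j * 1" using hA[OF assms(2)] \<open>p^i * q^j \<ge> 0\<close>
    by (intro mult_left_mono) auto
  then show False using s hA[OF assms(1)] assms(3) by simp
qed

lemma core2:
  assumes "a \<in> A" "a' \<in> A" "q^j * a = p^i * a'"
  shows "i = 0 \<and> j = 0"
proof (cases "i = 0")
  case True
  then have "p^0 * q^j * a = a'" using assms by simp
  then show ?thesis using core1[OF assms(2,1)] True by blast
next
  case False
  show ?thesis
  proof (cases "j = 0")
    case True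
    then have "p^i * q^0 * a' = a" using assms by simp
    then show ?thesis using core1[OF assms(1,2)] True by blast
  next
    case False2: False
    then show ?thesis using hd[of i j a' a] assms False by (auto simp: mult.commute)
  qed
qed

lemma core:
  assumes "a \<in> A" "a' \<in> A" "p^m * (q^n * a) = p^m' * (q^n' * a')"
  shows "m = m' \<and> n = n'"
proof -
  have pn: "p^k * q^l \<noteq> 0" for k l using hp hq by simp
  show ?thesis
  proof (cases "m \<le> m'")
    case True
    then obtain i where i: "m' = m + i" using le_Suc_ex by blast
    show ?thesis
    proof (cases "n \<le> n'")
      case True
      then obtain j where j: "n' = n + j" using le_Suc_ex by blast
      have "p^m * q^n * a = p^m * (q^n * a)" by (simp only: mult.assoc)
      also have "\<dots> = p^m' * (q^n' * a')" by (rule assms(3))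
      also have "\<dots> = p^m * q^n * (p^i * q^j * a')" unfolding i j power_add by (simp only: mult_ac)
      finally have "p^i * q^j * a' = a" by (subst (asm) mult_left_cancel[OF pn]) simp
      from core1[OF assms(1,2) this] i j show ?thesis by simp
    next
      case False
      then obtain j where j: "n = n' + j" using le_Suc_ex[of n' n] by auto
      have "p^m * q^n' * (q^j * a) = p^m * (q^n * a)" unfolding j power_add by (simp only: mult_ac)
      also have "\<dots> = p^m' * (q^n' * a')" by (rule assms(3))
      also have "\<dots> = p^m * q^n' * (p^i * a')" unfolding i power_add by (simp only: mult_ac)
      finally have "q^j * a = p^i * a'" by (subst (asm) mult_left_cancel[OF pn]) simp
      from core2[OF assms(1,2) this] i j show ?thesis by simp
    qed
  next
    case False
    then obtain i where i: "m = m' + i" using le_Suc_ex[of m' m] by auto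
    show ?thesis
    proof (cases "n \<le> n'")
      case True
      then obtain j where j: "n' = n + j" using le_Suc_ex by blast
      have "p^m' * q^n * (q^j * a') = p^m' * (q^n' * a')" unfolding j power_add by (simp only: mult_ac)
      also have "\<dots> = p^m * (q^n * a)" by (rule assms(3)[symmetric])
      also have "\<dots> = p^m' * q^n * (p^i * a)" unfolding i power_add by (simp only: mult_ac)
      finally have "q^j * a' = p^i * a" by (subst (asm) mult_left_cancel[OF pn]) simp
      from core2[OF assms(2,1) this] i j show ?thesis by simp
    next
      case False
      then obtain j where j: "n = n' + j" using le_Suc_ex[of n' n] by auto
      have "p^m' * q^n' * a' = p^m' * (q^n' * a')" by (simp only: mult.assoc)
      also have "\<dots> = p^m * (q^n * a)" by (rule assms(3)[symmetric])
      also have "\<dots> = p^m' * q^n' * (p^i * q^j * a)" unfolding i j power_add by (simp only: mult_ac)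
      finally have "p^i * q^j * a = a'" by (subst (asm) mult_left_cancel[OF pn]) simp
      from core1[OF assms(2,1) this] i j show ?thesis by simp
    qed
  qed
qed

end

theorem proposition2:
  fixes p q :: real and K A :: "real set"
    and S1 S2 S3 S4 :: "real \<Rightarrow> real"
  assumes hp: "0 < p" "p < 1/2" and hq: "0 < q" "q < 1/2"
    and S1_def: "S1 = (\<lambda>x. p * x)"
    and S2_def: "S2 = (\<lambda>x. q * x)"
    and S3_def: "S3 = (\<lambda>x. p * x + 1 - p)"
    and S4_def: "S4 = (\<lambda>x. q * x + 1 - q)"
    and hK: "is_attractor {S1, S2, S3, S4} K"
    and A_def: "A = S3 ` K \<union> S4 ` K"
    and hdisj: "\<And>m n::nat. m \<ge> 1 \<Longrightarrow> n \<ge> 1 \<Longrightarrow> (S1 ^^ m) ` A \<inter> (S2 ^^ n) ` A = {}"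
  shows "(K = {0} \<union> (\<Union>m::nat. \<Union>n::nat. (S1 ^^ m) ` (S2 ^^ n) ` A)
          \<and> (\<forall>m n m' n'::nat. (m, n) \<noteq> (m', n') \<longrightarrow>
                ((S1 ^^ m) ` (S2 ^^ n) ` A) \<inter> ((S1 ^^ m') ` (S2 ^^ n') ` A) = {})
          \<and> (\<forall>m n::nat. 0 \<notin> (S1 ^^ m) ` (S2 ^^ n) ` A))
         \<and> (\<forall>m n::nat. (S1 ^^ m) ` K \<inter> (S2 ^^ n) ` K = (S1 ^^ m) ` (S2 ^^ n) ` K)"
proof -
  have it1: "(S1^^m) = (\<lambda>x. p^m*x)" for m by (induction m) (auto simp: S1_def fun_eq_iff)
  have it2: "(S2^^m) = (\<lambda>x. q^m*x)" for m by (induction m) (auto simp: S2_def fun_eq_iff)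
  from hK have hK': "K \<noteq> {} \<and> compact K \<and> K = (\<Union>f\<in>{S1,S2,S3,S4}. f ` K)"
    unfolding is_attractor_def .
  note Kne = conjunct1[OF hK'] and Kc = conjunct1[OF conjunct2[OF hK']]
    and Keq0 = conjunct2[OF conjunct2[OF hK']]
  have UNeq: "(\<Union>f\<in>{S1,S2,S3,S4}. f ` K) = S1`K \<union> S2`K \<union> S3`K \<union> S4`K"
    by (simp add: Un_assoc)
  have Keq: "K = S1`K \<union> S2`K \<union> S3`K \<union> S4`K" using Keq0 UNeq by (rule trans)
  have Kiff: "x \<in> K \<longleftrightarrow> x \<in> S1`K \<union> S2`K \<union> S3`K \<union> S4`K" for x
    by (simp only: Keq[symmetric])
  have hKinv: "p*x \<in> K" "q*x \<in> K" "p*x+1-p \<in> K" "q*x+1-q \<in> K" if "x \<in> K" for x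
    using that Kiff[of "p*x"] Kiff[of "q*x"] Kiff[of "p*x+1-p"] Kiff[of "q*x+1-q"]
    unfolding S1_def S2_def S3_def S4_def by blast+
  have hKel: "\<exists>y\<in>K. x = p*y \<or> x = q*y \<or> x = p*y+1-p \<or> x = q*y+1-q" if "x \<in> K" for x
    using that Kiff[of x] unfolding S1_def S2_def S3_def S4_def by blast
  obtain M where M: "M \<in> K" "\<forall>t\<in>K. t \<le> M" using compact_attains_sup[OF Kc Kne] by blast
  obtain N where N: "N \<in> K" "\<forall>t\<in>K. N \<le> t" using compact_attains_inf[OF Kc Kne] by blast
  have M1: "M \<le> 1"
  proof (rule ccontr)
    assume "\<not> M \<le> 1"
    then have M1: "M > 1" by simp
    obtain y where y: "y \<in> K" "M = p*y \<or> M = q*y \<or> M = p*y+1-p \<or> M = q*y+1-q"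
      using hKel[OF M(1)] by blast
    have "y \<le> M" using M y by blast
    then have "p*y \<le> p*M" "q*y \<le> q*M" using hp hq by (auto intro: mult_left_mono)
    moreover have "(1-p)*1 < (1-p)*M" "(1-q)*1 < (1-q)*M" using M1 hp hq
      by (intro mult_strict_left_mono; simp)+
    then have "1-p < M-p*M" "1-q < M-q*M" by (simp_all add: algebra_simps)
    moreover have "p*M < 1*M" "q*M < 1*M" using M1 hp hq
      by (intro mult_strict_right_mono; simp)+
    ultimately show False using y(2) hp hq by (elim disjE) linarith+
  qed
  have N0: "N \<ge> 0"
  proof (rule ccontr)
    assume "\<not> N \<ge> 0"
    then have N0: "N < 0" by simp
    obtain y where y: "y \<in> K" "N = p*y \<or> N = q*y \<or> N = p*y+1-p \<or> N = q*y+1-q"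
      using hKel[OF N(1)] by blast
    have "N \<le> y" using N y by blast
    then have "p*N \<le> p*y" "q*N \<le> q*y" using hp hq by (auto intro: mult_left_mono)
    moreover have "(1-p)*N < (1-p)*0" "(1-q)*N < (1-q)*0" using N0 hp hq
      by (intro mult_strict_left_mono; simp)+
    then have "N-p*N < 0" "N-q*N < 0" by (simp_all add: algebra_simps)
    moreover have "1*N < p*N" "1*N < q*N" using N0 hp hq
      by (intro mult_strict_right_mono_neg; simp)+
    ultimately show False using y(2) hp hq by (elim disjE) linarith+
  qed
  have K01: "0 \<le> x \<and> x \<le> 1" if "x \<in> K" for x using that M N M1 N0 by force
  have powK: "p^m*(q^n*x) \<in> K" if "x \<in> K" for m n x
  proof -
    have "q^n*x \<in> K" by (induction n) (use that hKinv in \<open>auto simp: mult.assoc\<close>)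
    then show ?thesis by (induction m) (use hKinv in \<open>auto simp: mult.assoc\<close>)
  qed
  have zeroK: "0 \<in> K"
  proof -
    obtain k where k: "k \<in> K" using Kne by blast
    have "(\<lambda>n. p^n) \<longlonglongrightarrow> 0" using hp by (intro LIMSEQ_power_zero) auto
    then have "(\<lambda>n. p^n * (q^0 * k)) \<longlonglongrightarrow> 0 * (q^0 * k)"
      by (intro tendsto_mult tendsto_const)
    then have "(\<lambda>n. p^n * (q^0 * k)) \<longlonglongrightarrow> 0" by simp
    moreover have "\<And>n. p^n * (q^0 * k) \<in> K" using powK[OF k] by blast
    ultimately show ?thesis using closed_sequentially[OF compact_imp_closed[OF Kc], of "\<lambda>n. p^n * (q^0 * k)" 0] by blast
  qed
  have AK: "A \<subseteq> K"
  proof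
    fix a assume "a \<in> A"
    then show "a \<in> K" using A_def Kiff[of a] by blast
  qed
  have hA: "1/2 < a \<and> a \<le> 1" if aA: "a \<in> A" for a
  proof -
    obtain y where y: "y \<in> K" "a = p*y+1-p \<or> a = q*y+1-q" using aA A_def S3_def S4_def by blast
    have "0 \<le> y" "y \<le> 1" using K01 y by auto
    then have "0 \<le> p*y" "p*y \<le> p" "0 \<le> q*y" "q*y \<le> q" using hp hq
      by (auto simp: mult_left_le)
    then show ?thesis using y hp hq by auto
  qed
  have hd: "p^m * a \<noteq> q^n * a'" if "m \<ge> 1" "n \<ge> 1" "a \<in> A" "a' \<in> A" for m n a a'
    using hdisj[OF that(1,2)] that(3,4) unfolding it1 it2 by blast
  interpret setting p q A using hp hq hA hd by unfold_locales auto
  define r where "r = max p q"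
  have r: "0 < r" "r < 1" using hp hq unfolding r_def by auto
  have step: "\<forall>x\<in>K. (\<exists>m n a. a \<in> A \<and> x = p^m*(q^n*a)) \<or> x \<le> r^k" for k
  proof (induction k)
    case 0 then show ?case using K01 by auto
  next
    case (Suc k)
    show ?case
    proof
      fix x assume x: "x \<in> K"
      from x Kiff[of x] consider (a) "x \<in> A" | (b) y where "y \<in> K" "x = p*y" | (c) y where "y \<in> K" "x = q*y"
        unfolding A_def S1_def S2_def by blast
      then show "(\<exists>m n a. a \<in> A \<and> x = p^m*(q^n*a)) \<or> x \<le> r^Suc k"
      proof cases
        case a
        then have "x = p^0*(q^0*x)" by simp
        then show ?thesis using a by blast
      next
        case (b y)
        from Suc b(1) consider (u) m n a where "a \<in> A" "y = p^m*(q^n*a)" | (v) "y \<le> r^k" by blast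
        then show ?thesis
        proof cases
          case u
          then have "x = p^Suc m*(q^n*a)" using b by simp
          then show ?thesis using u by blast
        next
          case v
          have "p*y \<le> r*r^k" using v hp K01[OF b(1)] unfolding r_def
            by (intro mult_mono) auto
          then show ?thesis using b by simp
        qed
      next
        case (c y)
        from Suc c(1) consider (u) m n a where "a \<in> A" "y = p^m*(q^n*a)" | (v) "y \<le> r^k" by blast
        then show ?thesis
        proof cases
          case u
          then have "x = p^m*(q^Suc n*a)" using c by (simp add: algebra_simps)
          then show ?thesis using u by blast
        next
          case v
          have "q*y \<le> r*r^k" using v hq K01[OF c(1)] unfolding r_def
            by (intro mult_mono) auto
          then show ?thesis using c by simp
        qed
      qed
    qed
  qed
  have Kchar: "x \<in> K \<longleftrightarrow> x = 0 \<or> (\<exists>m n a. a \<in> A \<and> x = p^m*(q^n*a))" for x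
  proof
    assume x: "x \<in> K"
    show "x = 0 \<or> (\<exists>m n a. a \<in> A \<and> x = p^m*(q^n*a))"
    proof (cases "x = 0")
      case False
      then have "x > 0" using K01[OF x] by auto
      then obtain k where "r^k < x" using real_arch_pow_inv r by blast
      then show ?thesis using step[of k] x by force
    qed simp
  next
    assume "x = 0 \<or> (\<exists>m n a. a \<in> A \<and> x = p^m*(q^n*a))"
    then show "x \<in> K" using zeroK powK AK by blast
  qed
  have pos: "p^m*(q^n*a) > 0" if "a \<in> A" for m n a using hA[OF that] hp hq by simp
  have part1: "K = {0} \<union> (\<Union>m::nat. \<Union>n::nat. (S1 ^^ m) ` (S2 ^^ n) ` A)"
    unfolding it1 it2 image_image
  proof (rule set_eqI)
    fix x
    have U: "x \<in> (\<Union>m n. (\<lambda>x. p^m*(q^n*x)) ` A) \<longleftrightarrow> (\<exists>m n a. a \<in> A \<and> x = p^m*(q^n*a))"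
      by blast
    show "x \<in> K \<longleftrightarrow> x \<in> {0} \<union> (\<Union>m n. (\<lambda>x. p^m*(q^n*x)) ` A)"
      unfolding Un_iff singleton_iff U Kchar ..
  qed
  have part2: "\<forall>m n m' n'::nat. (m, n) \<noteq> (m', n') \<longrightarrow>
                ((S1 ^^ m) ` (S2 ^^ n) ` A) \<inter> ((S1 ^^ m') ` (S2 ^^ n') ` A) = {}"
  proof (intro allI impI)
    fix m n m' n' :: nat assume ne: "(m, n) \<noteq> (m', n')"
    have False if x: "x \<in> (\<lambda>x. p^m*(q^n*x)) ` A \<inter> (\<lambda>x. p^m'*(q^n'*x)) ` A" for x
    proof -
      from x obtain a a' where "a \<in> A" "a' \<in> A" "p^m*(q^n*a) = p^m'*(q^n'*a')" by auto
      then show False using core ne by blast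
    qed
    then show "((S1 ^^ m) ` (S2 ^^ n) ` A) \<inter> ((S1 ^^ m') ` (S2 ^^ n') ` A) = {}"
      unfolding it1 it2 image_image by blast
  qed
  have part3: "\<forall>m n::nat. 0 \<notin> (S1 ^^ m) ` (S2 ^^ n) ` A"
  proof (intro allI)
    fix m n :: nat
    have "0 \<noteq> p^m*(q^n*a)" if "a \<in> A" for a using pos[OF that, of m n] by linarith
    then show "0 \<notin> (S1 ^^ m) ` (S2 ^^ n) ` A" unfolding it1 it2 image_image by blast
  qed
  have part4: "(S1 ^^ m) ` K \<inter> (S2 ^^ n) ` K = (S1 ^^ m) ` (S2 ^^ n) ` K" for m n
    unfolding it1 it2 image_image
  proof
    show "(\<lambda>x. p^m*(q^n*x)) ` K \<subseteq> (\<lambda>x. p^m*x) ` K \<inter> (\<lambda>x. q^n*x) ` K"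
    proof
      fix x assume "x \<in> (\<lambda>x. p^m*(q^n*x)) ` K"
      then obtain k where k: "k \<in> K" "x = p^m*(q^n*k)" by blast
      have "q^n*k \<in> K" using powK[OF k(1), of 0 n] by simp
      moreover have "p^m*k \<in> K" using powK[OF k(1), of m 0] by simp
      moreover have "x = q^n*(p^m*k)" using k by (simp add: algebra_simps)
      ultimately show "x \<in> (\<lambda>x. p^m*x) ` K \<inter> (\<lambda>x. q^n*x) ` K" using k by blast
    qed
  next
    show "(\<lambda>x. p^m*x) ` K \<inter> (\<lambda>x. q^n*x) ` K \<subseteq> (\<lambda>x. p^m*(q^n*x)) ` K"
    proof
      fix x assume "x \<in> (\<lambda>x. p^m*x) ` K \<inter> (\<lambda>x. q^n*x) ` K"
      then obtain y z where yz: "y \<in> K" "z \<in> K" "x = p^m*y" "x = q^n*z" by blast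
      show "x \<in> (\<lambda>x. p^m*(q^n*x)) ` K"
      proof (cases "y = 0")
        case True
        then show ?thesis using yz zeroK by force
      next
        case False
        then obtain a b \<alpha> where y: "\<alpha> \<in> A" "y = p^a*(q^b*\<alpha>)" using Kchar yz(1) by blast
        have "z \<noteq> 0" using False yz hp by auto
        then obtain c d \<beta> where z: "\<beta> \<in> A" "z = p^c*(q^d*\<beta>)" using Kchar yz(2) by blast
        have "p^(m+a)*(q^b*\<alpha>) = p^c*(q^(n+d)*\<beta>)" using yz y z
          by (simp add: power_add algebra_simps)
        then have e: "m + a = c" "b = n + d" using core[OF y(1) z(1)] by auto
        have "x = p^m*(q^n*(p^a*(q^d*\<alpha>)))" using yz y e by (simp add: power_add algebra_simps)
        moreover have "p^a*(q^d*\<alpha>) \<in> K" using powK AK y(1) by blast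
        ultimately show ?thesis by blast
      qed
    qed
  qed
  have part4': "\<forall>m n::nat. (S1 ^^ m) ` K \<inter> (S2 ^^ n) ` K = (S1 ^^ m) ` (S2 ^^ n) ` K"
    using part4 by (intro allI)
  show ?thesis by (intro conjI part1 part2 part3 part4')
qed

end
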